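(* In the setting below, for any two points $p,q\in X$ exactly one of the following holds or at least one of: (i) $S_p\cap S_q=\emptyset$; (ii) $S_p\subseteq S_q$ or $S_q\subseteq S_p$; (iii) $S_p\cup S_q=E$ and $|S_p\cap S_q|=1$; (iv) $S_p\cup S_q=E$ and $|S_p\cap S_q|=n-1$. That is, at least one of (i)–(iv) holds.
   Context: Setting: $E=\{e_0,\dots,e_n\}\subset\mathbb R^n$ is the vertex set of an $n$-simplex with $e_0+\cdots+e_n=0$, and $X\subset\mathbb R^n\setminus\{0\}$ is a finite set with $E\subseteq X$, no element of $X$ a positive multiple of another, such that every $n+1$ points of $X$ are in good position. (A finite set $A$ is in conical position if $0\notin\operatorname{conv}A$ and no point of $A$ lies in the positive hull—set of nonnegative linear combinations—of the other points; it is in good position otherwise.) For $p\in X$, the support $S_p$ is the minimal subset of $E$ whose positive hull contains $p$. *)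

theory Defs
  imports "HOL-Analysis.Analysis"
begin

definition pos_hull :: "'a::real_vector set \<Rightarrow> 'a set" where
  "pos_hull A = {x. \<exists>c. (\<forall>a\<in>A. c a \<ge> 0) \<and> x = (\<Sum>a\<in>A. c a *\<^sub>R a)}"

definition conical_position :: "'a::real_vector set \<Rightarrow> bool" where
  "conical_position A \<longleftrightarrow> 0 \<notin> convex hull A \<and> (\<forall>a\<in>A. a \<notin> pos_hull (A - {a}))"

definition good_position :: "'a::real_vector set \<Rightarrow> bool" where
  "good_position A \<longleftrightarrow> \<not> conical_position A"

definition is_support :: "'a::real_vector set \<Rightarrow> 'a \<Rightarrow> 'a set \<Rightarrow> bool" where
  "is_support E p S \<longleftrightarrow> S \<subseteq> E \<and> p \<in> pos_hull S \<and> (\<forall>T. T \<subset> S \<longrightarrow> p \<notin> pos_hull T)"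

end

theory Submission imports Defs begin

lemma const_coeffs:
  fixes E :: "'a::euclidean_space set"
  assumes fin: "finite E" and ne: "E \<noteq> {}" and ind: "\<not> affine_dependent E" and s0: "\<Sum>E = 0"
    and rel: "(\<Sum>e\<in>E. f e *\<^sub>R e) = 0" and e1: "e1 \<in> E" and e2: "e2 \<in> E"
  shows "f e1 = f e2"
proof -
  define m where "m = sum f E / real (card E)"
  define u where "u e = f e - m" for e
  have cE: "real (card E) \<noteq> 0" using fin ne by simp
  have su: "sum u E = 0" unfolding u_def m_def using cE by (simp add: sum_subtractf)
  have "(\<Sum>e\<in>E. u e *\<^sub>R e) = (\<Sum>e\<in>E. f e *\<^sub>R e) - m *\<^sub>R (\<Sum>e\<in>E. e)"
    unfolding u_def by (simp add: scaleR_diff_left sum_subtractf scaleR_sum_right)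
  also have "\<dots> = 0" using rel s0 by simp
  finally have su2: "(\<Sum>e\<in>E. u e *\<^sub>R e) = 0" .
  have "\<forall>v\<in>E. u v = 0"
  proof (rule ccontr)
    assume "\<not> (\<forall>v\<in>E. u v = 0)"
    then have "affine_dependent E" unfolding affine_dependent_explicit_finite[OF fin]
      using su su2 by blast
    with ind show False by simp
  qed
  then show ?thesis using e1 e2 unfolding u_def by force
qed

lemma conical_from_rel:
  fixes A :: "'a::real_vector set"
  assumes fin: "finite A"
    and H: "\<And>\<mu>. (\<Sum>a\<in>A. \<mu> a *\<^sub>R a) = 0 \<Longrightarrow> (\<exists>a\<in>A. \<mu> a \<noteq> 0) \<Longrightarrow>
              (\<exists>a\<in>A. \<exists>b\<in>A. a \<noteq> b \<and> \<mu> a < 0 \<and> \<mu> b < 0)"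
  shows "conical_position A"
  unfolding conical_position_def
proof
  show "0 \<notin> convex hull A"
  proof
    assume "0 \<in> convex hull A"
    then obtain u where u: "\<forall>x\<in>A. 0 \<le> u x" "sum u A = 1" "(\<Sum>x\<in>A. u x *\<^sub>R x) = 0"
      unfolding convex_hull_finite[OF fin] by auto
    have "\<exists>a\<in>A. u a \<noteq> 0" using u(2) by (metis sum.neutral zero_neq_one)
    from H[OF u(3) this] u(1) show False by force
  qed
  show "\<forall>a\<in>A. a \<notin> pos_hull (A - {a})"
  proof (intro ballI notI)
    fix a assume aA: "a \<in> A" and "a \<in> pos_hull (A - {a})"
    then obtain c where c: "\<forall>b\<in>A - {a}. c b \<ge> 0" "a = (\<Sum>b\<in>A - {a}. c b *\<^sub>R b)"
      unfolding pos_hull_def by auto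
    define \<mu> where "\<mu> b = (if b = a then -1 else c b)" for b
    have "(\<Sum>b\<in>A. \<mu> b *\<^sub>R b) = \<mu> a *\<^sub>R a + (\<Sum>b\<in>A - {a}. \<mu> b *\<^sub>R b)"
      using sum.remove[OF fin aA] by blast
    also have "(\<Sum>b\<in>A - {a}. \<mu> b *\<^sub>R b) = (\<Sum>b\<in>A - {a}. c b *\<^sub>R b)"
      by (rule sum.cong) (auto simp: \<mu>_def)
    finally have "(\<Sum>b\<in>A. \<mu> b *\<^sub>R b) = 0" using c(2) by (simp add: \<mu>_def)
    from H[OF this] aA obtain x y where "x \<in> A" "y \<in> A" "x \<noteq> y" "\<mu> x < 0" "\<mu> y < 0"
      by (force simp: \<mu>_def)
    then show False using c(1) unfolding \<mu>_def by (metis DiffI empty_iff insert_iff not_le)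
  qed
qed


lemma supp_rep:
  fixes E :: "'a::real_vector set"
  assumes S: "is_support E p S" and fin: "finite E"
  shows "\<exists>\<alpha>. p = (\<Sum>e\<in>E. \<alpha> e *\<^sub>R e) \<and> (\<forall>e\<in>E. \<alpha> e \<ge> 0) \<and> (\<forall>e\<in>E. \<alpha> e > 0 \<longleftrightarrow> e \<in> S)
         \<and> (\<forall>e. e \<notin> S \<longrightarrow> \<alpha> e = 0)"
proof -
  have SE: "S \<subseteq> E" and pS: "p \<in> pos_hull S" and mn: "\<forall>T. T \<subset> S \<longrightarrow> p \<notin> pos_hull T"
    using S unfolding is_support_def by auto
  have finS: "finite S" using SE fin finite_subset by blast
  obtain c where c: "\<forall>a\<in>S. c a \<ge> 0" "p = (\<Sum>a\<in>S. c a *\<^sub>R a)"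
    using pS unfolding pos_hull_def by auto
  have cpos: "\<forall>a\<in>S. c a > 0"
  proof
    fix a assume aS: "a \<in> S"
    show "c a > 0"
    proof (rule ccontr)
      assume "\<not> c a > 0"
      then have ca: "c a = 0" using c(1) aS by force
      have "p = (\<Sum>b\<in>S - {a}. c b *\<^sub>R b)"
        using c(2) sum.remove[OF finS aS, of "\<lambda>b. c b *\<^sub>R b"] ca by simp
      then have "p \<in> pos_hull (S - {a})" unfolding pos_hull_def using c(1) by auto
      moreover have "S - {a} \<subset> S" using aS by auto
      ultimately show False using mn by blast
    qed
  qed
  define \<alpha> where "\<alpha> e = (if e \<in> S then c e else 0)" for e
  have "(\<Sum>e\<in>E. \<alpha> e *\<^sub>R e) = (\<Sum>e\<in>S. \<alpha> e *\<^sub>R e)"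
    by (rule sum.mono_neutral_right[OF fin SE]) (auto simp: \<alpha>_def)
  also have "\<dots> = p" using c(2) by (auto simp: \<alpha>_def intro: sum.cong)
  finally show ?thesis using cpos c(1) by (intro exI[of _ \<alpha>]) (auto simp: \<alpha>_def)
qed

lemma supp_neE:
  fixes E :: "'a::real_vector set"
  assumes S: "is_support E p S" and fin: "finite E" and ne: "E \<noteq> {}" and s0: "\<Sum>E = 0"
  shows "S \<noteq> E"
proof
  assume SE: "S = E"
  obtain \<alpha> where a: "p = (\<Sum>e\<in>E. \<alpha> e *\<^sub>R e)" "\<forall>e\<in>E. \<alpha> e > 0 \<longleftrightarrow> e \<in> S"
    using supp_rep[OF S fin] by blast
  have "Min (\<alpha> ` E) \<in> \<alpha> ` E" using fin ne by simp
  then obtain e0 where e0E: "e0 \<in> E" and e0m: "\<alpha> e0 = Min (\<alpha> ` E)" by auto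
  have e0: "e0 \<in> E" "\<forall>e\<in>E. \<alpha> e0 \<le> \<alpha> e" using e0E e0m fin by auto
  have "p = (\<Sum>e\<in>E. \<alpha> e *\<^sub>R e) - \<alpha> e0 *\<^sub>R (\<Sum>e\<in>E. e)" using a(1) s0 by simp
  also have "\<dots> = (\<Sum>e\<in>E. (\<alpha> e - \<alpha> e0) *\<^sub>R e)"
    by (simp add: scaleR_diff_left sum_subtractf scaleR_sum_right)
  also have "\<dots> = (\<Sum>e\<in>E - {e0}. (\<alpha> e - \<alpha> e0) *\<^sub>R e)"
    using sum.remove[OF fin e0(1), of "\<lambda>e. (\<alpha> e - \<alpha> e0) *\<^sub>R e"] by simp
  finally have "p \<in> pos_hull (E - {e0})" unfolding pos_hull_def using e0(2)
    by (intro CollectI exI[of _ "\<lambda>e. \<alpha> e - \<alpha> e0"]) auto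
  moreover have "E - {e0} \<subset> S" using SE e0(1) by auto
  ultimately show False using S unfolding is_support_def by blast
qed

lemma expand_diff:
  fixes E :: "'a::real_vector set" and \<mu> :: "'a \<Rightarrow> real"
  assumes "finite E" "D \<subseteq> E"
  shows "(\<Sum>e\<in>E - D. \<mu> e *\<^sub>R e) = (\<Sum>e\<in>E. (if e \<in> D then 0 else \<mu> e) *\<^sub>R e)"
proof -
  have "(\<Sum>e\<in>E. (if e \<in> D then 0 else \<mu> e) *\<^sub>R e) = (\<Sum>e\<in>E - D. (if e \<in> D then 0 else \<mu> e) *\<^sub>R e)"
    by (rule sum.mono_neutral_right) (use assms in auto)
  also have "\<dots> = (\<Sum>e\<in>E - D. \<mu> e *\<^sub>R e)" by (rule sum.cong) auto
  finally show ?thesis by simp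
qed

lemma scale_rep:
  fixes E :: "'a::real_vector set" and \<alpha> :: "'a \<Rightarrow> real"
  assumes "x = (\<Sum>e\<in>E. \<alpha> e *\<^sub>R e)"
  shows "t *\<^sub>R x = (\<Sum>e\<in>E. (t * \<alpha> e) *\<^sub>R e)"
  using assms by (simp add: scaleR_sum_right)

lemma rel1:
  fixes E :: "'a::euclidean_space set"
  assumes fin: "finite E" and ne: "E \<noteq> {}" and ind: "\<not> affine_dependent E" and s0: "\<Sum>E = 0"
    and pE: "p \<notin> E" and DE: "D \<subseteq> E" and rep: "p = (\<Sum>e\<in>E. \<alpha> e *\<^sub>R e)"
    and rel: "(\<Sum>a\<in>insert p (E - D). \<mu> a *\<^sub>R a) = 0" and e1: "e1 \<in> E" and e2: "e2 \<in> E"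
  shows "\<mu> p * \<alpha> e1 + (if e1 \<in> D then 0 else \<mu> e1) = \<mu> p * \<alpha> e2 + (if e2 \<in> D then 0 else \<mu> e2)"
proof (rule const_coeffs[OF fin ne ind s0 _ e1 e2])
  have "(\<Sum>a\<in>insert p (E - D). \<mu> a *\<^sub>R a) = \<mu> p *\<^sub>R p + (\<Sum>e\<in>E - D. \<mu> e *\<^sub>R e)"
    using pE fin by (simp add: sum.insert)
  also have "\<dots> = (\<Sum>e\<in>E. (\<mu> p * \<alpha> e + (if e \<in> D then 0 else \<mu> e)) *\<^sub>R e)"
    unfolding expand_diff[OF fin DE] scale_rep[OF rep]
    unfolding scaleR_add_left sum.distrib by (simp only: add.assoc)
  finally show "(\<Sum>e\<in>E. (\<mu> p * \<alpha> e + (if e \<in> D then 0 else \<mu> e)) *\<^sub>R e) = 0" using rel by simp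
qed

lemma rel2:
  fixes E :: "'a::euclidean_space set"
  assumes fin: "finite E" and ne: "E \<noteq> {}" and ind: "\<not> affine_dependent E" and s0: "\<Sum>E = 0"
    and pE: "p \<notin> E" and qE: "q \<notin> E" and pq: "p \<noteq> q" and DE: "D \<subseteq> E"
    and rep: "p = (\<Sum>e\<in>E. \<alpha> e *\<^sub>R e)" and repq: "q = (\<Sum>e\<in>E. \<beta> e *\<^sub>R e)"
    and rel: "(\<Sum>a\<in>insert p (insert q (E - D)). \<mu> a *\<^sub>R a) = 0" and e1: "e1 \<in> E" and e2: "e2 \<in> E"
  shows "\<mu> p * \<alpha> e1 + \<mu> q * \<beta> e1 + (if e1 \<in> D then 0 else \<mu> e1)
       = \<mu> p * \<alpha> e2 + \<mu> q * \<beta> e2 + (if e2 \<in> D then 0 else \<mu> e2)"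
proof (rule const_coeffs[OF fin ne ind s0 _ e1 e2])
  have "(\<Sum>a\<in>insert p (insert q (E - D)). \<mu> a *\<^sub>R a)
      = \<mu> p *\<^sub>R p + (\<mu> q *\<^sub>R q + (\<Sum>e\<in>E - D. \<mu> e *\<^sub>R e))"
    using pE qE pq fin by (simp add: sum.insert)
  also have "\<dots> = (\<Sum>e\<in>E. (\<mu> p * \<alpha> e + \<mu> q * \<beta> e + (if e \<in> D then 0 else \<mu> e)) *\<^sub>R e)"
    unfolding expand_diff[OF fin DE] scale_rep[OF rep] scale_rep[OF repq]
    unfolding scaleR_add_left sum.distrib by (simp only: add.assoc)
  finally show "(\<Sum>e\<in>E. (\<mu> p * \<alpha> e + \<mu> q * \<beta> e + (if e \<in> D then 0 else \<mu> e)) *\<^sub>R e) = 0"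
    using rel by simp
qed


lemma card_A2:
  assumes fin: "finite E" and pE: "p \<notin> E" and qE: "q \<notin> E" and pq: "p \<noteq> q"
    and a: "a \<in> E" and b: "b \<in> E" and ab: "a \<noteq> b" and c: "card E = N + 1"
  shows "card (insert p (insert q (E - {a, b}))) = N + 1"
proof -
  have "card (E - {a, b}) = card E - 2" using fin a b ab by (simp add: card_Diff_subset)
  moreover have "card E \<ge> 2"
  proof -
    have "{a,b} \<subseteq> E" using a b by auto
    then have "card {a,b} \<le> card E" using fin card_mono by blast
    then show ?thesis using ab by simp
  qed
  ultimately show ?thesis using fin pE qE pq c by simp
qed

lemma struct:
  fixes E X :: "'a::euclidean_space set"
  assumes fin: "finite E" and ne: "E \<noteq> {}" and ind: "\<not> affine_dependent E" and s0: "\<Sum>E = 0"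
    and cardE: "card E = DIM('a) + 1" and EX: "E \<subseteq> X"
    and good: "\<forall>A. A \<subseteq> X \<and> card A = DIM('a) + 1 \<longrightarrow> good_position A"
    and pX: "p \<in> X" and pE: "p \<notin> E" and rep: "p = (\<Sum>e\<in>E. \<alpha> e *\<^sub>R e)"
    and z: "z \<in> E" "\<alpha> z = 0" and d: "d \<in> E" "\<alpha> d > 0"
    and e1: "e1 \<in> E" "\<alpha> e1 > \<alpha> d" and e2: "e2 \<in> E" "\<alpha> e2 > \<alpha> d" and e12: "e1 \<noteq> e2"
  shows False
proof -
  let ?A = "insert p (E - {d})"
  have AX: "?A \<subseteq> X" using EX pX by auto
  have finA: "finite ?A" using fin by simp
  have cardA: "card ?A = DIM('a) + 1" using fin pE d cardE by (simp add: card_Diff_singleton)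
  have "conical_position ?A"
  proof (rule conical_from_rel[OF finA])
    fix \<mu> assume rel: "(\<Sum>a\<in>?A. \<mu> a *\<^sub>R a) = 0" and nz: "\<exists>a\<in>?A. \<mu> a \<noteq> 0"
    have key: "\<mu> e = \<mu> p * (\<alpha> d - \<alpha> e)" if "e \<in> E" "e \<noteq> d" for e
      using rel1[OF fin ne ind s0 pE _ rep rel that(1) d(1)] d(1) that(2)
      by (simp add: algebra_simps)
    show "\<exists>a\<in>?A. \<exists>b\<in>?A. a \<noteq> b \<and> \<mu> a < 0 \<and> \<mu> b < 0"
    proof (cases "\<mu> p" "0::real" rule: linorder_cases)
      case less
      have zd: "z \<noteq> d" using z d by auto
      have "\<mu> z < 0" using key[OF z(1) zd] z(2) less d(2) by (simp add: mult_neg_pos)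
      moreover have "z \<in> ?A" "p \<noteq> z" using z zd pE by auto
      ultimately show ?thesis using less by blast
    next
      case equal
      then have "\<forall>a\<in>?A. \<mu> a = 0" using key by auto
      then show ?thesis using nz by blast
    next
      case greater
      have "e1 \<noteq> d" "e2 \<noteq> d" using e1 e2 by auto
      then have "\<mu> e1 < 0" "\<mu> e2 < 0" using key e1 e2 greater by (auto simp: mult_pos_neg)
      moreover have "e1 \<in> ?A" "e2 \<in> ?A" using e1 e2 \<open>e1 \<noteq> d\<close> \<open>e2 \<noteq> d\<close> by auto
      ultimately show ?thesis using e12 by blast
    qed
  qed
  then show False using good AX cardA unfolding good_position_def by blast
qed

lemma caseR:
  fixes E :: "'a::euclidean_space set"
  assumes fin: "finite E" and ne: "E \<noteq> {}" and ind: "\<not> affine_dependent E" and s0: "\<Sum>E = 0"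
    and pE: "p \<notin> E" and qE: "q \<notin> E" and pq: "p \<noteq> q"
    and rep: "p = (\<Sum>e\<in>E. \<alpha> e *\<^sub>R e)" and repq: "q = (\<Sum>e\<in>E. \<beta> e *\<^sub>R e)"
    and i: "i \<in> E" "\<alpha> i > 0" "\<beta> i > 0" and r: "r \<in> E" "\<alpha> r = 0" "\<beta> r = 0"
    and x: "x \<in> E" "\<alpha> x > 0" "\<beta> x = 0" and y: "y \<in> E" "\<beta> y > 0" "\<alpha> y = 0"
  shows "conical_position (insert p (insert q (E - {i, r})))"
proof (rule conical_from_rel)
  show "finite (insert p (insert q (E - {i, r})))" using fin by simp
  fix \<mu> assume rel: "(\<Sum>a\<in>insert p (insert q (E - {i, r})). \<mu> a *\<^sub>R a) = 0"
    and nz: "\<exists>a\<in>insert p (insert q (E - {i, r})). \<mu> a \<noteq> 0"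
  have DE: "{i, r} \<subseteq> E" using i r by auto
  have ir: "i \<noteq> r" using i r by auto
  have fi: "\<mu> p * \<alpha> i + \<mu> q * \<beta> i = 0"
    using rel2[OF fin ne ind s0 pE qE pq DE rep repq rel i(1) r(1)] r by simp
  have key: "\<mu> e = - (\<mu> p * \<alpha> e + \<mu> q * \<beta> e)" if "e \<in> E" "e \<noteq> i" "e \<noteq> r" for e
    using rel2[OF fin ne ind s0 pE qE pq DE rep repq rel that(1) r(1)] r that by simp
  have xir: "x \<noteq> i" "x \<noteq> r" "y \<noteq> i" "y \<noteq> r" using x y i r by auto
  show "\<exists>a\<in>insert p (insert q (E - {i, r})). \<exists>b\<in>insert p (insert q (E - {i, r})). a \<noteq> b \<and> \<mu> a < 0 \<and> \<mu> b < 0"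
  proof (cases "\<mu> p" "0::real" rule: linorder_cases)
    case less
    have "\<mu> q * \<beta> i > 0" using fi less i(2) by (smt (verit) mult_neg_pos)
    then have "\<mu> q > 0" using i(3) by (simp add: zero_less_mult_iff)
    then have "\<mu> y < 0" using key[OF y(1) xir(3,4)] y by (simp add: mult_pos_pos)
    moreover have "y \<in> insert p (insert q (E - {i, r}))" "p \<noteq> y" using y xir pE by auto
    ultimately show ?thesis using less by blast
  next
    case equal
    then have "\<mu> q = 0" using fi i by simp
    then have "\<forall>a\<in>insert p (insert q (E - {i, r})). \<mu> a = 0" using key equal by auto
    then show ?thesis using nz by blast
  next
    case greater
    have "\<mu> q * \<beta> i < 0" using fi greater i(2) by (smt (verit) mult_pos_pos)
    then have "\<mu> q < 0" using i(3) by (simp add: mult_less_0_iff)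
    moreover have "\<mu> x < 0" using key[OF x(1) xir(1,2)] x greater by (simp add: mult_pos_pos)
    moreover have "x \<in> insert p (insert q (E - {i, r}))" "q \<noteq> x" using x xir qE by auto
    ultimately show ?thesis by blast
  qed
qed

lemma caseU:
  fixes E :: "'a::euclidean_space set"
  assumes fin: "finite E" and ne: "E \<noteq> {}" and ind: "\<not> affine_dependent E" and s0: "\<Sum>E = 0"
    and pE: "p \<notin> E" and qE: "q \<notin> E" and pq: "p \<noteq> q"
    and rep: "p = (\<Sum>e\<in>E. \<alpha> e *\<^sub>R e)" and repq: "q = (\<Sum>e\<in>E. \<beta> e *\<^sub>R e)"
    and x: "x \<in> E" "\<alpha> x > 0" "\<beta> x = 0" and y: "y \<in> E" "\<beta> y > 0" "\<alpha> y = 0"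
    and I: "I \<subseteq> E - {x, y}" "2 \<le> card I" "\<forall>e\<in>I. \<alpha> e > 0 \<and> \<beta> e > 0"
    and bd: "(\<forall>e\<in>I. \<alpha> x \<le> \<alpha> e) \<or> (\<forall>e\<in>I. \<beta> y \<le> \<beta> e)"
  shows "conical_position (insert p (insert q (E - {x, y})))"
proof (rule conical_from_rel)
  show "finite (insert p (insert q (E - {x, y})))" using fin by simp
  fix \<mu> assume rel: "(\<Sum>a\<in>insert p (insert q (E - {x, y})). \<mu> a *\<^sub>R a) = 0"
    and nz: "\<exists>a\<in>insert p (insert q (E - {x, y})). \<mu> a \<noteq> 0"
  have DE: "{x, y} \<subseteq> E" using x y by auto
  have xy: "x \<noteq> y" using x y by auto
  have fxy: "\<mu> p * \<alpha> x = \<mu> q * \<beta> y"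
    using rel2[OF fin ne ind s0 pE qE pq DE rep repq rel x(1) y(1)] x y by simp
  have key: "\<mu> e = \<mu> p * \<alpha> x - (\<mu> p * \<alpha> e + \<mu> q * \<beta> e)" if "e \<in> E" "e \<noteq> x" "e \<noteq> y" for e
    using rel2[OF fin ne ind s0 pE qE pq DE rep repq rel that(1) x(1)] x that by simp
  show "\<exists>a\<in>insert p (insert q (E - {x, y})). \<exists>b\<in>insert p (insert q (E - {x, y})). a \<noteq> b \<and> \<mu> a < 0 \<and> \<mu> b < 0"
  proof (cases "\<mu> p" "0::real" rule: linorder_cases)
    case less
    then have "\<mu> p * \<alpha> x < 0" using x by (simp add: mult_neg_pos)
    then have "\<mu> q < 0" using fxy y(2) by (simp add: mult_less_0_iff)
    then show ?thesis using less pq by blast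
  next
    case equal
    then have "\<mu> q = 0" using fxy y by simp
    then have "\<forall>a\<in>insert p (insert q (E - {x, y})). \<mu> a = 0" using key equal by auto
    then show ?thesis using nz by blast
  next
    case greater
    then have "\<mu> p * \<alpha> x > 0" using x by simp
    then have mq: "\<mu> q > 0" using fxy y(2) by (simp add: zero_less_mult_iff)
    have neg: "\<mu> e < 0" if "e \<in> I" for e
    proof -
      have eE: "e \<in> E" "e \<noteq> x" "e \<noteq> y" using I(1) that by auto
      have pos: "\<alpha> e > 0" "\<beta> e > 0" using I(3) that by auto
      from bd show ?thesis
      proof
        assume "\<forall>e\<in>I. \<alpha> x \<le> \<alpha> e"
        then have "\<mu> p * \<alpha> x \<le> \<mu> p * \<alpha> e" using that greater by (simp add: mult_left_mono)
        moreover have "\<mu> q * \<beta> e > 0" using mq pos by simp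
        ultimately show ?thesis using key[OF eE] by linarith
      next
        assume "\<forall>e\<in>I. \<beta> y \<le> \<beta> e"
        then have "\<mu> q * \<beta> y \<le> \<mu> q * \<beta> e" using that mq by (simp add: mult_left_mono)
        moreover have "\<mu> p * \<alpha> e > 0" using greater pos by simp
        ultimately show ?thesis using key[OF eE] fxy by linarith
      qed
    qed
    obtain a b where ab: "a \<in> I" "b \<in> I" "a \<noteq> b"
      using I(2) by (metis One_nat_def card_le_Suc0_iff_eq not_less_eq_eq numeral_2_eq_2 card.infinite zero_le nat.simps(3)) 
    then have "a \<in> insert p (insert q (E - {x, y}))" "b \<in> insert p (insert q (E - {x, y}))"
      using I(1) by auto
    then show ?thesis using ab neg by blast
  qed
qed


lemma notinE:
  fixes E :: "'a::euclidean_space set"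
  assumes fin: "finite E" and ne: "E \<noteq> {}" and ind: "\<not> affine_dependent E" and s0: "\<Sum>E = 0"
    and rep: "p = (\<Sum>e\<in>E. \<alpha> e *\<^sub>R e)" and nn: "\<forall>e\<in>E. \<alpha> e \<ge> 0"
    and SE: "S \<subseteq> E" "S \<noteq> E" and iff: "\<forall>e\<in>E. \<alpha> e > 0 \<longleftrightarrow> e \<in> S"
    and x: "x \<in> S" and i: "i \<in> S" and xi: "x \<noteq> i"
  shows "p \<notin> E"
proof
  assume pE: "p \<in> E"
  have "(\<Sum>e\<in>E. (if e = p then 1 else 0) *\<^sub>R e) = (\<Sum>e\<in>E. (if e = p then e else 0))"
    by (rule sum.cong) auto
  also have "\<dots> = p" using pE fin by (simp add: sum.delta')
  finally have d: "(\<Sum>e\<in>E. (if e = p then 1 else 0) *\<^sub>R e) = p" .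
  have "(\<Sum>e\<in>E. (\<alpha> e - (if e = p then 1 else 0)) *\<^sub>R e) = 0"
    using d rep by (simp add: scaleR_diff_left sum_subtractf)
  note c = const_coeffs[OF fin ne ind s0 this]
  obtain z where z: "z \<in> S" "z \<noteq> p" using x i xi by auto
  have zE: "z \<in> E" using z SE by auto
  have az: "\<alpha> z > 0" using iff zE z by auto
  have "\<forall>e\<in>E. e \<in> S"
  proof
    fix e assume eE: "e \<in> E"
    have "\<alpha> e - (if e = p then 1 else 0) = \<alpha> z" using c[OF eE zE] z by simp
    then have "\<alpha> e > 0" using az by (smt (verit))
    then show "e \<in> S" using iff eE by auto
  qed
  then show False using SE by auto
qed

theorem proposition6p2:
  fixes E X :: "'a::euclidean_space set" and p q :: 'a and Sp Sq :: "'a set"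
  assumes simplex: "card E = DIM('a) + 1" "\<not> affine_dependent E"
    and sum0: "\<Sum>E = 0"
    and finX: "finite X" and X0: "0 \<notin> X" and EX: "E \<subseteq> X"
    and nomult: "\<forall>x\<in>X. \<forall>y\<in>X. x \<noteq> y \<longrightarrow> \<not> (\<exists>t>0. y = t *\<^sub>R x)"
    and good: "\<forall>A. A \<subseteq> X \<and> card A = DIM('a) + 1 \<longrightarrow> good_position A"
    and pq: "p \<in> X" "q \<in> X"
    and Sp: "is_support E p Sp" and Sq: "is_support E q Sq"
  shows "Sp \<inter> Sq = {}
      \<or> (Sp \<subseteq> Sq \<or> Sq \<subseteq> Sp)
      \<or> (Sp \<union> Sq = E \<and> card (Sp \<inter> Sq) = 1)
      \<or> (Sp \<union> Sq = E \<and> card (Sp \<inter> Sq) = DIM('a) - 1)"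
proof (rule ccontr)
  assume neg: "\<not> ?thesis"
  have fin: "finite E" using simplex(1) by (metis card.infinite nat.simps(3) Suc_eq_plus1)
  have ne: "E \<noteq> {}" using simplex(1) by auto
  note ind = simplex(2)
  obtain \<alpha> where a: "p = (\<Sum>e\<in>E. \<alpha> e *\<^sub>R e)" "\<forall>e\<in>E. \<alpha> e \<ge> 0" "\<forall>e\<in>E. \<alpha> e > 0 \<longleftrightarrow> e \<in> Sp"
      "\<forall>e. e \<notin> Sp \<longrightarrow> \<alpha> e = 0"
    using supp_rep[OF Sp fin] by blast
  obtain \<beta> where b: "q = (\<Sum>e\<in>E. \<beta> e *\<^sub>R e)" "\<forall>e\<in>E. \<beta> e \<ge> 0" "\<forall>e\<in>E. \<beta> e > 0 \<longleftrightarrow> e \<in> Sq"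
      "\<forall>e. e \<notin> Sq \<longrightarrow> \<beta> e = 0"
    using supp_rep[OF Sq fin] by blast
  have SpE: "Sp \<subseteq> E" "Sp \<noteq> E" using Sp supp_neE[OF Sp fin ne sum0] unfolding is_support_def by auto
  have SqE: "Sq \<subseteq> E" "Sq \<noteq> E" using Sq supp_neE[OF Sq fin ne sum0] unfolding is_support_def by auto
  obtain i where i: "i \<in> Sp" "i \<in> Sq" using neg by blast
  obtain x where x: "x \<in> Sp" "x \<notin> Sq" using neg by blast
  obtain y where y: "y \<in> Sq" "y \<notin> Sp" using neg by blast
  have xE: "x \<in> E" "\<alpha> x > 0" "\<beta> x = 0" using x a b SpE by auto
  have yE: "y \<in> E" "\<beta> y > 0" "\<alpha> y = 0" using y a b SqE by auto
  have iE: "i \<in> E" "\<alpha> i > 0" "\<beta> i > 0" using i a b SpE by auto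
  have xi: "x \<noteq> i" "y \<noteq> i" "x \<noteq> y" using x y i by auto
  have pE: "p \<notin> E" by (rule notinE[OF fin ne ind sum0 a(1,2) SpE a(3) x(1) i(1) xi(1)])
  have qE: "q \<notin> E" by (rule notinE[OF fin ne ind sum0 b(1,2) SqE b(3) y(1) i(2) xi(2)])
  have pqne: "p \<noteq> q"
  proof
    assume "p = q"
    then have "(\<Sum>e\<in>E. (\<alpha> e - \<beta> e) *\<^sub>R e) = 0"
      using a(1) b(1) by (simp add: scaleR_diff_left sum_subtractf)
    from const_coeffs[OF fin ne ind sum0 this xE(1) yE(1)] xE yE show False by simp
  qed
  obtain zp where zp: "zp \<in> E" "\<alpha> zp = 0" using SpE a(4) by blast
  obtain zq where zq: "zq \<in> E" "\<beta> zq = 0" using SqE b(4) by blast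
  show False
  proof (cases "\<exists>r\<in>E. r \<notin> Sp \<and> r \<notin> Sq")
    case True
    then obtain r where r: "r \<in> E" "\<alpha> r = 0" "\<beta> r = 0" "r \<noteq> i" using a(4) b(4) i by metis
    have "conical_position (insert p (insert q (E - {i, r})))"
      by (rule caseR[OF fin ne ind sum0 pE qE pqne a(1) b(1) iE r(1-3) xE yE])
    moreover have "insert p (insert q (E - {i, r})) \<subseteq> X" using EX pq by auto
    moreover have "card (insert p (insert q (E - {i, r}))) = DIM('a) + 1"
      by (rule card_A2[OF fin pE qE pqne iE(1) r(1)]) (use r simplex in auto)
    ultimately show False using good unfolding good_position_def by blast
  next
    case False
    then have U: "Sp \<union> Sq = E" using SpE SqE by auto
    let ?I = "Sp \<inter> Sq" let ?P = "Sp - Sq" let ?Q = "Sq - Sp"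
    have finI: "finite ?I" "finite ?P" "finite ?Q" using fin SpE SqE by (auto intro: finite_subset)
    have c1: "card ?I \<noteq> 1" "card ?I \<noteq> DIM('a) - 1" using neg U by auto
    have c2: "2 \<le> card ?I"
    proof -
      have "card ?I \<noteq> 0" using finI i by auto
      then show ?thesis using c1 by linarith
    qed
    have IE: "?I \<subseteq> E - {x, y}" using x y SpE by auto
    have Ipos: "\<forall>e\<in>?I. \<alpha> e > 0 \<and> \<beta> e > 0" using a b SpE by auto
    have PQ: "2 \<le> card ?P \<or> 2 \<le> card ?Q"
    proof (rule ccontr)
      assume "\<not> ?thesis"
      then have "card ?P \<le> Suc 0" "card ?Q \<le> Suc 0" by auto
      then have "?P = {x}" "?Q = {y}" using x y finI card_le_Suc0_iff_eq by blast+
      then have "E = insert x (insert y ?I)" using U by blast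
      then have "card E = card ?I + 2" using finI x y xi by simp
      then show False using c1 simplex(1) by simp
    qed
    have conc: "conical_position (insert p (insert q (E - {x', y'})))"
      if "x' \<in> ?P" "y' \<in> ?Q" "(\<forall>e\<in>?I. \<alpha> x' \<le> \<alpha> e) \<or> (\<forall>e\<in>?I. \<beta> y' \<le> \<beta> e)" for x' y'
    proof (rule caseU[OF fin ne ind sum0 pE qE pqne a(1) b(1)])
      show "x' \<in> E" "\<alpha> x' > 0" "\<beta> x' = 0" using that a b SpE by auto
      show "y' \<in> E" "\<beta> y' > 0" "\<alpha> y' = 0" using that a b SqE by auto
      show "?I \<subseteq> E - {x', y'}" using that SpE by auto
    qed (use c2 Ipos that in auto)
    have cardc: "card (insert p (insert q (E - {x', y'}))) = DIM('a) + 1"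
      if "x' \<in> ?P" "y' \<in> ?Q" for x' y'
      by (rule card_A2[OF fin pE qE pqne]) (use that SpE SqE simplex in auto)
    have sub: "insert p (insert q (E - {x', y'})) \<subseteq> X" for x' y' using EX pq by auto
    from PQ show False
    proof
      assume cP: "2 \<le> card ?P"
      have "Min (\<alpha> ` ?P) \<in> \<alpha> ` ?P" using finI x by (intro Min_in) auto
      then obtain x' where x': "x' \<in> ?P" "\<alpha> x' = Min (\<alpha> ` ?P)" by auto
      have xmin: "\<forall>e\<in>?P. \<alpha> x' \<le> \<alpha> e" using x' finI by auto
      obtain x'' where x'': "x'' \<in> ?P" "x'' \<noteq> x'"
        using cP x'(1) finI card_le_Suc0_iff_eq[of ?P] by (metis not_less_eq_eq numeral_2_eq_2)
      have bd: "\<forall>e\<in>?I. \<alpha> x' \<le> \<alpha> e"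
      proof (rule ballI, rule ccontr)
        fix e assume eI: "e \<in> ?I" and lt: "\<not> \<alpha> x' \<le> \<alpha> e"
        show False
        proof (rule struct[OF fin ne ind sum0 simplex(1) EX good pq(1) pE a(1) zp])
          show "e \<in> E" "0 < \<alpha> e" using eI Ipos SpE by auto
          show "x' \<in> E" "\<alpha> e < \<alpha> x'" using x' lt SpE by auto
          show "x'' \<in> E" using x'' SpE by auto
          have "\<alpha> x' \<le> \<alpha> x''" using xmin x'' by blast
          then show "\<alpha> e < \<alpha> x''" using lt by linarith
          show "x' \<noteq> x''" using x'' by auto
        qed
      qed
      have "conical_position (insert p (insert q (E - {x', y})))"
        using conc[OF x'(1) _ ] y bd by auto
      then show False using good sub cardc[OF x'(1), of y] y unfolding good_position_def by blast
    next
      assume cQ: "2 \<le> card ?Q"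
      have "Min (\<beta> ` ?Q) \<in> \<beta> ` ?Q" using finI y by (intro Min_in) auto
      then obtain y' where y': "y' \<in> ?Q" "\<beta> y' = Min (\<beta> ` ?Q)" by auto
      have ymin: "\<forall>e\<in>?Q. \<beta> y' \<le> \<beta> e" using y' finI by auto
      obtain y'' where y'': "y'' \<in> ?Q" "y'' \<noteq> y'"
        using cQ y'(1) finI card_le_Suc0_iff_eq[of ?Q] by (metis not_less_eq_eq numeral_2_eq_2)
      have bd: "\<forall>e\<in>?I. \<beta> y' \<le> \<beta> e"
      proof (rule ballI, rule ccontr)
        fix e assume eI: "e \<in> ?I" and lt: "\<not> \<beta> y' \<le> \<beta> e"
        show False
        proof (rule struct[OF fin ne ind sum0 simplex(1) EX good pq(2) qE b(1) zq])
          show "e \<in> E" "0 < \<beta> e" using eI Ipos SpE by auto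
          show "y' \<in> E" "\<beta> e < \<beta> y'" using y' lt SqE by auto
          show "y'' \<in> E" using y'' SqE by auto
          have "\<beta> y' \<le> \<beta> y''" using ymin y'' by blast
          then show "\<beta> e < \<beta> y''" using lt by linarith
          show "y' \<noteq> y''" using y'' by auto
        qed
      qed
      have "conical_position (insert p (insert q (E - {x, y'})))"
        using conc[OF _ y'(1)] x bd by auto
      then show False using good sub cardc[OF _ y'(1), of x] x unfolding good_position_def by blast
    qed
  qed
qed

end
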